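(* Let $\mathcal{X}\subset\mathbb{R}^d$ be compact, let $k\colon\mathcal{X}\times\mathcal{X}\to\mathbb{R}$ be a covariance kernel with RKHS $H_k$ (norm $\|\cdot\|_k$), and let $F\sim\mathcal{N}(0,C)$ be a Gaussian random element in $E=C(\mathcal{X},\mathbb{R})$ whose covariance operator $C\colon R(\mathcal{X})\to C(\mathcal{X},\mathbb{R})$ is $C\nu(\cdot)=\int_{\mathcal{X}}k(\cdot,x')\,d\nu(x')$. Suppose data $y=(y_1,\dots,y_N)$ are noisy point evaluations $Y_n=F(x_n)+\epsilon_n$ at points $x_1,\dots,x_N\in\mathcal{X}$, with $\epsilon_n\sim\mathcal{N}(0,\sigma^2)$ i.i.d. and independent of $F$. Let $\mu_1,\dots,\mu_M\in R(\mathcal{X})$ be the features $L_m=\mu_m$ used in the variational approximation (with $C_{LL}$ invertible), and let $m_{Q^*}$ be the mean of the optimal variational measure $Q^*$, i.e. the function $$m_{Q^*}(x)=C_{xL}\big(\sigma^2C_{LL}+C_{LD}C_{DL}\big)^{-1}C_{LD}\,y,\qquad x\in\mathcal{X}.$$ Let $\mathcal{M}=\mathrm{span}\{C\mu_1,\dots,C\mu_M\}$ (where $C\mu_m=\int_{\mathcal{X}}k(\cdot,x')\,d\mu_m(x')$) and let $$\widehat f=\underset{f\in\mathcal{M}}{\arg\min}\ \frac1N\sum_{n=1}^N\big(f(x_n)-y_n\big)^2+\lambda\|f\|_k^2,\qquad \lambda>0,$$ be the Nyström kernel ridge regression estimator over $\mathcal{M}$. If $\sigma^2=N\lambda$, then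 $\widehat f=m_{Q^*}$.
   Context: $R(\mathcal{X})$ denotes the space of finite regular signed Borel measures on $\mathcal{X}$, identified with the dual of $C(\mathcal{X},\mathbb{R})$ via $f\mapsto\int f\,d\mu$; pointwise evaluation at $x$ corresponds to the Dirac measure $\delta_x$. A Gaussian random element $F$ in $E$ with mean $0$ and covariance operator $C$ means $(F,\mu)_E=\int F\,d\mu$ is a centred Gaussian random variable for every $\mu\in R(\mathcal{X})$, with $\mathrm{Cov}[(F,\mu)_E,(F,\nu)_E]=(C\mu,\nu)_E=\int\int k(x,x')\,d\mu(x')\,d\nu(x)$. Matrices: $(C_{LL})_{mm'}=\int\int k(x,x')\,d\mu_m(x)\,d\mu_{m'}(x')$; $(C_{LD})_{mn}=\int k(x',x_n)\,d\mu_m(x')$, $C_{DL}=C_{LD}^\top$; $(C_{xL})_m=\int k(x,x')\,d\mu_m(x')$. The optimal variational measure $Q^*$ is the maximiser, over $\mu\in\mathbb{R}^M$ and positive definite $\Sigma$, of the evidence lower bound for the variational family $Q(A)=\int_A\frac{dQ^L}{dP^L}\big((f,\mu_1)_E,\dots,(f,\mu_M)_E\big)\,dP(f)$, where $P$ is the law of $F$, $P^L=\mathcal{N}(0,C_{LL})$ is the prior law of the features and $Q^L=\mathcal{N}(\mu,\Sigma)$. *)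

theory Defs
  imports "HOL-Analysis.Analysis"
begin

(* A finite signed Borel measure on X, represented by its Jordan decomposition
   mu = mu_plus - mu_minus with two finite (nonnegative) Borel measures concentrated on X.
   On a compact subset of R^d every finite Borel measure is regular. *)
type_synonym 'a smeasure = "'a measure \<times> 'a measure"

definition signed_borel_on :: "'a::euclidean_space set \<Rightarrow> 'a smeasure \<Rightarrow> bool" where
  "signed_borel_on X \<mu> \<longleftrightarrow>
     (\<forall>M \<in> {fst \<mu>, snd \<mu>}. sets M = sets borel \<and> finite_measure M \<and> emeasure M (- X) = 0)"

definition sint :: "'a smeasure \<Rightarrow> ('a \<Rightarrow> real) \<Rightarrow> real" where
  "sint \<mu> f = (\<integral>x. f x \<partial>(fst \<mu>)) - (\<integral>x. f x \<partial>(snd \<mu>))"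

definition cov_kernel :: "'a::euclidean_space set \<Rightarrow> ('a \<Rightarrow> 'a \<Rightarrow> real) \<Rightarrow> bool" where
  "cov_kernel X k \<longleftrightarrow>
     continuous_on (X \<times> X) (\<lambda>(x, x'). k x x') \<and>
     (\<forall>x\<in>X. \<forall>x'\<in>X. k x x' = k x' x) \<and>
     (\<forall>n (z::nat \<Rightarrow> 'a) (c::nat \<Rightarrow> real). (\<forall>i<n. z i \<in> X) \<longrightarrow>
        0 \<le> (\<Sum>i<n. \<Sum>j<n. c i * c j * k (z i) (z j)))"

(* squared RKHS norm ||f||_k^2 of (the restriction to X of) f, in [0, infinity];
   it is +infinity iff f|X is not in H_k.  Standard characterisation:
   ||f||_k^2 = sup { (sum_i c_i f(z_i))^2 : z_i in X, sum_ij c_i c_j k(z_i,z_j) <= 1 }. *)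
definition rkhs_norm_sq :: "'a set \<Rightarrow> ('a \<Rightarrow> 'a \<Rightarrow> real) \<Rightarrow> ('a \<Rightarrow> real) \<Rightarrow> ereal" where
  "rkhs_norm_sq X k f =
     Sup {ereal ((\<Sum>i<n. c i * f (z i))\<^sup>2) | n (z::nat \<Rightarrow> 'a) (c::nat \<Rightarrow> real).
            (\<forall>i<n. z i \<in> X) \<and> (\<Sum>i<n. \<Sum>j<n. c i * c j * k (z i) (z j)) \<le> 1}"

definition cov_op :: "'a set \<Rightarrow> ('a \<Rightarrow> 'a \<Rightarrow> real) \<Rightarrow> 'a smeasure \<Rightarrow> 'a \<Rightarrow> real" where
  "cov_op X k \<mu> x = sint \<mu> (\<lambda>x'. indicator X x' * k x x')"

definition C_LL :: "'a set \<Rightarrow> ('a \<Rightarrow> 'a \<Rightarrow> real) \<Rightarrow> ('m \<Rightarrow> 'a smeasure) \<Rightarrow> real^'m^'m" where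
  "C_LL X k \<mu> = (\<chi> m m'. sint (\<mu> m) (\<lambda>x. indicator X x * cov_op X k (\<mu> m') x))"

definition C_LD :: "'a set \<Rightarrow> ('a \<Rightarrow> 'a \<Rightarrow> real) \<Rightarrow> ('m \<Rightarrow> 'a smeasure) \<Rightarrow> ('n \<Rightarrow> 'a) \<Rightarrow> real^'n^'m" where
  "C_LD X k \<mu> xs = (\<chi> m n. sint (\<mu> m) (\<lambda>x'. indicator X x' * k x' (xs n)))"

definition C_xL :: "'a set \<Rightarrow> ('a \<Rightarrow> 'a \<Rightarrow> real) \<Rightarrow> ('m \<Rightarrow> 'a smeasure) \<Rightarrow> 'a \<Rightarrow> real^'m" where
  "C_xL X k \<mu> x = (\<chi> m. cov_op X k (\<mu> m) x)"

definition mean_Qstar :: "'a set \<Rightarrow> ('a \<Rightarrow> 'a \<Rightarrow> real) \<Rightarrow> ('m::finite \<Rightarrow> 'a smeasure)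
    \<Rightarrow> ('n::finite \<Rightarrow> 'a) \<Rightarrow> real^'n \<Rightarrow> real \<Rightarrow> 'a \<Rightarrow> real" where
  "mean_Qstar X k \<mu> xs y \<sigma>2 x =
     C_xL X k \<mu> x \<bullet>
       (matrix_inv (\<sigma>2 *\<^sub>R C_LL X k \<mu> + C_LD X k \<mu> xs ** transpose (C_LD X k \<mu> xs))
          *v (C_LD X k \<mu> xs *v y))"

definition nystrom_space :: "'a set \<Rightarrow> ('a \<Rightarrow> 'a \<Rightarrow> real) \<Rightarrow> ('m::finite \<Rightarrow> 'a smeasure) \<Rightarrow> ('a \<Rightarrow> real) set" where
  "nystrom_space X k \<mu> = {(\<lambda>x. \<Sum>m\<in>UNIV. a m * cov_op X k (\<mu> m) x) | a. True}"

definition krr_objective :: "'a set \<Rightarrow> ('a \<Rightarrow> 'a \<Rightarrow> real) \<Rightarrow> ('n::finite \<Rightarrow> 'a) \<Rightarrow> real^'n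
    \<Rightarrow> real \<Rightarrow> ('a \<Rightarrow> real) \<Rightarrow> ereal" where
  "krr_objective X k xs y lam f =
     ereal ((1 / real CARD('n)) * (\<Sum>n\<in>UNIV. (f (xs n) - y $ n)\<^sup>2)) + ereal lam * rkhs_norm_sq X k f"

definition is_argmin_on :: "('b \<Rightarrow> ereal) \<Rightarrow> 'b set \<Rightarrow> 'b \<Rightarrow> bool" where
  "is_argmin_on J S f \<longleftrightarrow> f \<in> S \<and> (\<forall>g\<in>S. J f \<le> J g)"

end

theory Submission
  imports Defs
begin

definition goodm :: "'a::euclidean_space set \<Rightarrow> 'a measure \<Rightarrow> bool" where
  "goodm X M \<longleftrightarrow> sets M = sets borel \<and> finite_measure M \<and> emeasure M (- X) = 0"

lemma goodm_space: "goodm X M \<Longrightarrow> space M = UNIV"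
  unfolding goodm_def by (metis sets_eq_imp_space_eq space_borel)

lemma goodm_fin: "goodm X M \<Longrightarrow> finite_measure M"
  unfolding goodm_def by auto

lemma signed_good: "signed_borel_on X \<mu> \<Longrightarrow> goodm X (fst \<mu>) \<and> goodm X (snd \<mu>)"
  unfolding signed_borel_on_def goodm_def by auto

lemma cont_bounded:
  fixes h :: "'a::euclidean_space \<Rightarrow> real"
  assumes "compact X" "continuous_on X h"
  shows "\<exists>B. \<forall>x\<in>X. \<bar>h x\<bar> \<le> B"
proof -
  have "bounded (h ` X)" using assms compact_continuous_image compact_imp_bounded by blast
  then show ?thesis unfolding bounded_iff by auto
qed

lemma int_ok:
  fixes h :: "'a::euclidean_space \<Rightarrow> real"
  assumes g: "goodm X M" and cX: "compact X" and hc: "continuous_on X h"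
  shows "integrable M (\<lambda>x. indicator X x * h x)"
proof -
  obtain B0 where B0: "\<forall>x\<in>X. \<bar>h x\<bar> \<le> B0" using cont_bounded[OF cX hc] by auto
  define B where "B = max B0 0"
  have B: "\<forall>x. \<bar>indicator X x * h x\<bar> \<le> B"
    using B0 unfolding B_def by (auto simp: indicator_def)
  have Xb: "X \<in> sets borel" using cX compact_imp_closed borel_closed by auto
  have m0: "(\<lambda>x. indicator X x * h x) \<in> borel_measurable borel"
    using borel_measurable_continuous_on_indicator[OF Xb hc] by simp
  have sM: "sets M = sets borel" using g unfolding goodm_def by simp
  have m: "(\<lambda>x. indicator X x * h x) \<in> borel_measurable M"
    unfolding measurable_cong_sets[OF sM refl] by (rule m0)
  have "AE x in M. norm (indicator X x * h x) \<le> B"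
    using B by (intro AE_I2) simp
  then show ?thesis
    using finite_measure.integrable_const_bound[OF goodm_fin[OF g] _ m] by blast
qed

lemma int_ind:
  assumes g: "goodm X M" and "A \<in> sets borel"
  shows "integral\<^sup>L M (indicator A :: _ \<Rightarrow> real) = measure M A"
  using goodm_space[OF g] by simp

lemma absI2: "(a::real) \<le> b \<Longrightarrow> - b \<le> a \<Longrightarrow> \<bar>a\<bar> \<le> b"
  by simp

lemma int_bound:
  fixes h :: "'a::euclidean_space \<Rightarrow> real"
  assumes g: "goodm X M" and cX: "compact X" and hc: "continuous_on X h"
    and B: "\<forall>x\<in>X. \<bar>h x\<bar> \<le> B"
  shows "\<bar>\<integral>x. indicator X x * h x \<partial>M\<bar> \<le> B * measure M X"
proof -
  have Xb: "X \<in> sets borel" using cX compact_imp_closed borel_closed by auto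
  have fm: "finite_measure M" using goodm_fin[OF g] .
  have iI: "integrable M (indicator X :: _ \<Rightarrow> real)"
    using int_ok[OF g cX continuous_on_const[of X 1]] by simp
  have iB: "\<And>c. integrable M (\<lambda>x. c * indicator X x :: real)" using iI by simp
  have e: "(\<integral>x. B * indicator X x \<partial>M) = B * measure M X"
    using int_ind[OF g Xb] by simp
  have i1: "integrable M (\<lambda>x. indicator X x * h x)" using int_ok[OF g cX hc] .
  have u: "(\<integral>x. indicator X x * h x \<partial>M) \<le> (\<integral>x. B * indicator X x \<partial>M)"
    using B by (intro integral_mono i1 iB) (auto simp: indicator_def abs_le_iff)
  have ineq: "(\<integral>x. - B * indicator X x \<partial>M) \<le> (\<integral>x. indicator X x * h x \<partial>M)"
    using B by (intro integral_mono i1 iB) (auto simp: indicator_def abs_le_iff)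
  have eq: "(\<integral>x. - B * indicator X x \<partial>M) = - (B * measure M X)"
    using int_ind[OF g Xb] by simp
  have l: "- (B * measure M X) \<le> (\<integral>x. indicator X x * h x \<partial>M)" using eq ineq by (rule ord_eq_le_trans[OF sym])
  show ?thesis using u l unfolding e by (rule absI2)
qed

lemma int_bound_gen:
  fixes f :: "'a::euclidean_space \<Rightarrow> real"
  assumes g: "goodm X M" and cX: "compact X" and fi: "integrable M f"
    and B: "\<forall>x. \<bar>f x\<bar> \<le> e * indicator X x"
  shows "\<bar>\<integral>x. f x \<partial>M\<bar> \<le> e * measure M X"
proof -
  have Xb: "X \<in> sets borel" using cX compact_imp_closed borel_closed by auto
  have iI: "integrable M (indicator X :: _ \<Rightarrow> real)"
    using int_ok[OF g cX continuous_on_const[of X 1]] by simp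
  have iB: "\<And>c. integrable M (\<lambda>x. c * indicator X x :: real)" using iI by simp
  have e: "(\<integral>x. e * indicator X x \<partial>M) = e * measure M X"
    using int_ind[OF g Xb] by simp
  have u: "(\<integral>x. f x \<partial>M) \<le> (\<integral>x. e * indicator X x \<partial>M)"
    using B by (intro integral_mono fi iB) (auto simp: abs_le_iff)
  have ineq: "(\<integral>x. - e * indicator X x \<partial>M) \<le> (\<integral>x. f x \<partial>M)"
    using B by (intro integral_mono fi iB) (metis abs_le_iff minus_le_iff mult_minus_left)
  have eq: "(\<integral>x. - e * indicator X x \<partial>M) = - (e * measure M X)"
    using int_ind[OF g Xb] by simp
  have l: "- (e * measure M X) \<le> (\<integral>x. f x \<partial>M)" using eq ineq by (rule ord_eq_le_trans[OF sym])
  show ?thesis using u l unfolding e by (rule absI2)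
qed

definition partn :: "'a::euclidean_space set \<Rightarrow> nat \<Rightarrow> (nat \<Rightarrow> 'a set) \<Rightarrow> (nat \<Rightarrow> 'a) \<Rightarrow> bool" where
  "partn X J A z \<longleftrightarrow> (\<forall>j<J. A j \<in> sets borel \<and> z j \<in> X) \<and> disjoint_family_on A {..<J}
     \<and> (\<Union>j\<in>{..<J}. A j) = X"

lemma int_approx:
  fixes h :: "'a::euclidean_space \<Rightarrow> real"
  assumes g: "goodm X M" and cX: "compact X" and hc: "continuous_on X h"
    and P: "partn X J A z"
    and md: "\<forall>j<J. \<forall>x\<in>A j. \<bar>h x - h (z j)\<bar> \<le> e"
  shows "\<bar>(\<integral>x. indicator X x * h x \<partial>M) - (\<Sum>j<J. measure M (A j) * h (z j))\<bar> \<le> e * measure M X"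
proof -
  have Ab: "\<And>j. j < J \<Longrightarrow> A j \<in> sets borel" and disj: "disjoint_family_on A {..<J}"
    and un: "(\<Union>j\<in>{..<J}. A j) = X" using P unfolding partn_def by auto
  have ind: "\<And>x. indicator X x = (\<Sum>j<J. indicator (A j) x :: real)"
    using indicator_UN_disjoint[OF _ disj] un by (metis finite_lessThan)
  have sM: "sets M = sets borel" using g unfolding goodm_def by simp
  have fm: "finite_measure M" using goodm_fin[OF g] .
  have iA: "\<And>j c. j < J \<Longrightarrow> integrable M (\<lambda>x. indicator (A j) x * c :: real)"
  proof -
    fix j c assume "j < J"
    then have "A j \<in> sets M" using Ab sM by auto
    then have "integrable M (indicator (A j) :: _ \<Rightarrow> real)"
      using fm by (intro integrable_real_indicator) (simp_all add: finite_measure.emeasure_finite less_top[symmetric])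
    then show "integrable M (\<lambda>x. indicator (A j) x * c :: real)" by simp
  qed
  have s1: "(\<Sum>j<J. measure M (A j) * h (z j)) = (\<integral>x. (\<Sum>j<J. indicator (A j) x * h (z j)) \<partial>M)"
  proof -
    have "(\<integral>x. (\<Sum>j<J. indicator (A j) x * h (z j)) \<partial>M) = (\<Sum>j<J. \<integral>x. indicator (A j) x * h (z j) \<partial>M)"
      by (rule Bochner_Integration.integral_sum[where f="\<lambda>j x. indicator (A j) x * h (z j)"]) (rule iA, simp)
    also have "\<dots> = (\<Sum>j<J. measure M (A j) * h (z j))"
      by (intro sum.cong refl) (simp add: goodm_space[OF g])
    finally show ?thesis by simp
  qed
  have i1: "integrable M (\<lambda>x. indicator X x * h x)" using int_ok[OF g cX hc] .
  have i2: "integrable M (\<lambda>x. (\<Sum>j<J. indicator (A j) x * h (z j)))"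
    by (intro Bochner_Integration.integrable_sum iA) simp
  have dd: "(\<integral>x. indicator X x * h x \<partial>M) - (\<Sum>j<J. measure M (A j) * h (z j))
      = (\<integral>x. indicator X x * h x - (\<Sum>j<J. indicator (A j) x * h (z j)) \<partial>M)"
    unfolding s1 by (rule Bochner_Integration.integral_diff[OF i1 i2, symmetric])
  have pw: "\<bar>indicator X x * h x - (\<Sum>j<J. indicator (A j) x * h (z j))\<bar> \<le> e * indicator X x" for x
  proof -
    have "indicator X x * h x - (\<Sum>j<J. indicator (A j) x * h (z j))
        = (\<Sum>j<J. indicator (A j) x * (h x - h (z j)))"
      unfolding ind by (simp add: sum_distrib_right sum_subtractf right_diff_distrib)
    also have "\<bar>\<dots>\<bar> \<le> (\<Sum>j<J. \<bar>indicator (A j) x * (h x - h (z j))\<bar>)" by (rule sum_abs)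
    also have "\<dots> \<le> (\<Sum>j<J. e * indicator (A j) x)"
      using md by (intro sum_mono) (auto simp: indicator_def)
    also have "\<dots> = e * indicator X x" unfolding ind by (simp add: sum_distrib_left)
    finally show ?thesis .
  qed
  show ?thesis unfolding dd
    by (rule int_bound_gen[OF g cX _ allI[OF pw]]) (intro Bochner_Integration.integrable_diff i1 i2)
qed

definition Tm :: "'a::euclidean_space set \<Rightarrow> 'a smeasure \<Rightarrow> real" where
  "Tm X \<nu> = measure (fst \<nu>) X + measure (snd \<nu>) X"

definition wt :: "(nat \<Rightarrow> 'a::euclidean_space set) \<Rightarrow> 'a smeasure \<Rightarrow> nat \<Rightarrow> real" where
  "wt A \<nu> j = measure (fst \<nu>) (A j) - measure (snd \<nu>) (A j)"

lemma Tm_nonneg: "0 \<le> Tm X \<nu>"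
  unfolding Tm_def by simp

lemma sint_approx:
  fixes h :: "'a::euclidean_space \<Rightarrow> real"
  assumes g: "signed_borel_on X \<nu>" and cX: "compact X" and hc: "continuous_on X h"
    and P: "partn X J A z"
    and md: "\<forall>j<J. \<forall>x\<in>A j. \<bar>h x - h (z j)\<bar> \<le> e"
  shows "\<bar>sint \<nu> (\<lambda>x. indicator X x * h x) - (\<Sum>j<J. wt A \<nu> j * h (z j))\<bar> \<le> e * Tm X \<nu>"
proof -
  have g1: "goodm X (fst \<nu>)" and g2: "goodm X (snd \<nu>)" using signed_good[OF g] by auto
  have "(\<Sum>j<J. wt A \<nu> j * h (z j)) = (\<Sum>j<J. measure (fst \<nu>) (A j) * h (z j)) - (\<Sum>j<J. measure (snd \<nu>) (A j) * h (z j))"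
    unfolding wt_def by (simp add: sum_subtractf left_diff_distrib)
  then have "sint \<nu> (\<lambda>x. indicator X x * h x) - (\<Sum>j<J. wt A \<nu> j * h (z j))
     = ((\<integral>x. indicator X x * h x \<partial>fst \<nu>) - (\<Sum>j<J. measure (fst \<nu>) (A j) * h (z j)))
       - ((\<integral>x. indicator X x * h x \<partial>snd \<nu>) - (\<Sum>j<J. measure (snd \<nu>) (A j) * h (z j)))"
    unfolding sint_def by simp
  moreover note int_approx[OF g1 cX hc P md] int_approx[OF g2 cX hc P md]
  ultimately show ?thesis unfolding Tm_def by (simp add: algebra_simps; smt (verit))
qed

lemma sint_bound:
  fixes h :: "'a::euclidean_space \<Rightarrow> real"
  assumes g: "signed_borel_on X \<nu>" and cX: "compact X" and hc: "continuous_on X h"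
    and B: "\<forall>x\<in>X. \<bar>h x\<bar> \<le> B"
  shows "\<bar>sint \<nu> (\<lambda>x. indicator X x * h x)\<bar> \<le> B * Tm X \<nu>"
proof -
  have g1: "goodm X (fst \<nu>)" and g2: "goodm X (snd \<nu>)" using signed_good[OF g] by auto
  from int_bound[OF g1 cX hc B] int_bound[OF g2 cX hc B] show ?thesis
    unfolding sint_def Tm_def by (simp add: algebra_simps; smt (verit))
qed

lemma sint_diff:
  fixes h1 h2 :: "'a::euclidean_space \<Rightarrow> real"
  assumes g: "signed_borel_on X \<nu>" and cX: "compact X" and c1: "continuous_on X h1" and c2: "continuous_on X h2"
  shows "sint \<nu> (\<lambda>x. indicator X x * (h1 x - h2 x)) = sint \<nu> (\<lambda>x. indicator X x * h1 x) - sint \<nu> (\<lambda>x. indicator X x * h2 x)"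
proof -
  have g1: "goodm X (fst \<nu>)" and g2: "goodm X (snd \<nu>)" using signed_good[OF g] by auto
  have e: "(\<lambda>x. indicator X x * (h1 x - h2 x)) = (\<lambda>x. indicator X x * h1 x - indicator X x * h2 x)"
    by (simp add: right_diff_distrib)
  show ?thesis unfolding sint_def e
    using Bochner_Integration.integral_diff[OF int_ok[OF g1 cX c1] int_ok[OF g1 cX c2]]
      Bochner_Integration.integral_diff[OF int_ok[OF g2 cX c1] int_ok[OF g2 cX c2]] by simp
qed

lemma sint_sum:
  fixes h :: "'i \<Rightarrow> 'a::euclidean_space \<Rightarrow> real"
  assumes g: "signed_borel_on X \<nu>" and cX: "compact X" and c: "\<And>i. i \<in> I \<Longrightarrow> continuous_on X (h i)"
  shows "sint \<nu> (\<lambda>x. indicator X x * (\<Sum>i\<in>I. a i * h i x)) = (\<Sum>i\<in>I. a i * sint \<nu> (\<lambda>x. indicator X x * h i x))"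
proof -
  have g1: "goodm X (fst \<nu>)" and g2: "goodm X (snd \<nu>)" using signed_good[OF g] by auto
  have e: "(\<lambda>x. indicator X x * (\<Sum>i\<in>I. a i * h i x)) = (\<lambda>x. \<Sum>i\<in>I. a i * (indicator X x * h i x))"
    by (simp add: sum_distrib_left ac_simps)
  have "(\<integral>x. (\<Sum>i\<in>I. a i * (indicator X x * h i x)) \<partial>M) = (\<Sum>i\<in>I. a i * (\<integral>x. indicator X x * h i x \<partial>M))"
    if gM: "goodm X M" for M
  proof -
    have "(\<integral>x. (\<Sum>i\<in>I. a i * (indicator X x * h i x)) \<partial>M) = (\<Sum>i\<in>I. (\<integral>x. a i * (indicator X x * h i x) \<partial>M))"
      by (rule Bochner_Integration.integral_sum[where f="\<lambda>i x. a i * (indicator X x * h i x)"])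
        (intro integrable_mult_right int_ok[OF gM cX c], simp)
    then show ?thesis by simp
  qed
  from this[OF g1] this[OF g2] show ?thesis unfolding sint_def e
    by (simp add: sum_subtractf right_diff_distrib)
qed

lemma sum_measure_part:
  assumes g: "goodm X M" and cX: "compact X" and P: "partn X J A z"
  shows "(\<Sum>j<J. measure M (A j)) = measure M X"
proof -
  have Xb: "X \<in> sets borel" using cX compact_imp_closed borel_closed by auto
  have "\<bar>(\<integral>x. indicator X x * 1 \<partial>M) - (\<Sum>j<J. measure M (A j) * 1)\<bar> \<le> 0 * measure M X"
    by (rule int_approx[OF g cX continuous_on_const P]) simp
  then show ?thesis using int_ind[OF g Xb] by simp
qed

lemma sum_wt:
  assumes g: "signed_borel_on X \<nu>" and cX: "compact X" and P: "partn X J A z"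
  shows "(\<Sum>j<J. \<bar>wt A \<nu> j\<bar>) \<le> Tm X \<nu>"
proof -
  have g1: "goodm X (fst \<nu>)" and g2: "goodm X (snd \<nu>)" using signed_good[OF g] by auto
  have "(\<Sum>j<J. \<bar>wt A \<nu> j\<bar>) \<le> (\<Sum>j<J. measure (fst \<nu>) (A j) + measure (snd \<nu>) (A j))"
    unfolding wt_def by (intro sum_mono) (simp add: abs_le_iff)
  also have "\<dots> = Tm X \<nu>"
    unfolding Tm_def sum.distrib sum_measure_part[OF g1 cX P] sum_measure_part[OF g2 cX P] ..
  finally show ?thesis .
qed

locale kr =
  fixes X :: "'a::euclidean_space set" and k :: "'a \<Rightarrow> 'a \<Rightarrow> real"
    and \<mu> :: "'m::finite \<Rightarrow> 'a smeasure"
  assumes cX: "compact X" and ck: "cov_kernel X k" and g\<mu>: "\<And>m. signed_borel_on X (\<mu> m)"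
begin

lemma ksym: "x \<in> X \<Longrightarrow> t \<in> X \<Longrightarrow> k x t = k t x"
  using ck unfolding cov_kernel_def by auto

lemma kpsd: "(\<forall>i<(n::nat). z i \<in> X) \<Longrightarrow> 0 \<le> (\<Sum>i<n. \<Sum>j<n. c i * c j * k (z i) (z j))"
  using ck unfolding cov_kernel_def by blast

lemma kcont: "continuous_on (X \<times> X) (\<lambda>(x, x'). k x x')"
  using ck unfolding cov_kernel_def by auto

lemma kunif: "e > 0 \<Longrightarrow> \<exists>d>0. \<forall>x\<in>X. \<forall>x'\<in>X. \<forall>t\<in>X. dist x x' < d \<longrightarrow> \<bar>k x t - k x' t\<bar> < e"
proof -
  assume e: "e > 0"
  have "uniformly_continuous_on (X \<times> X) (\<lambda>(x, x'). k x x')"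
    by (rule compact_uniformly_continuous[OF kcont compact_Times[OF cX cX]])
  then obtain d where d: "d > 0" and
    H: "\<forall>p\<in>X \<times> X. \<forall>p'\<in>X \<times> X. dist p' p < d \<longrightarrow> dist ((\<lambda>(x, x'). k x x') p') ((\<lambda>(x, x'). k x x') p) < e"
    using e unfolding uniformly_continuous_on_def by metis
  show ?thesis
  proof (intro exI[of _ d] conjI d ballI impI)
    fix x x' t assume xX: "x \<in> X" and x'X: "x' \<in> X" and tX: "t \<in> X" and dd: "dist x x' < d"
    have "dist (x, t) (x', t) < d" using dd by (simp add: dist_Pair_Pair)
    then have "dist (k x t) (k x' t) < e" using H xX x'X tX by fastforce
    then show "\<bar>k x t - k x' t\<bar> < e" by (simp add: dist_real_def)
  qed
qed

lemma kcont2: "x \<in> X \<Longrightarrow> continuous_on X (\<lambda>t. k x t)"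
proof -
  assume xX: "x \<in> X"
  have "continuous_on X ((\<lambda>(x, x'). k x x') \<circ> (\<lambda>t. (x, t)))"
    by (rule continuous_on_compose) (auto intro!: continuous_intros continuous_on_subset[OF kcont] simp: xX)
  then show ?thesis by (simp add: o_def)
qed

lemma cov_diffb:
  assumes g: "signed_borel_on X \<nu>" and xX: "x \<in> X" and yX: "y \<in> X"
    and B: "\<forall>t\<in>X. \<bar>k x t - k y t\<bar> \<le> e"
  shows "\<bar>cov_op X k \<nu> x - cov_op X k \<nu> y\<bar> \<le> e * Tm X \<nu>"
  unfolding cov_op_def
  using sint_diff[OF g cX kcont2[OF xX] kcont2[OF yX]] sint_bound[OF g cX _ B]
    continuous_on_diff[OF kcont2[OF xX] kcont2[OF yX]] by simp

lemma cov_cont: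
  assumes g: "signed_borel_on X \<nu>"
  shows "continuous_on X (cov_op X k \<nu>)"
  unfolding continuous_on_iff
proof (intro ballI allI impI)
  fix x and e :: real assume xX: "x \<in> X" and e: "0 < e"
  define e' where "e' = e / (Tm X \<nu> + 1)"
  have T0: "0 \<le> Tm X \<nu>" by (rule Tm_nonneg)
  have e': "e' > 0" unfolding e'_def using e T0 by simp
  obtain d where d: "d > 0" and H: "\<forall>x\<in>X. \<forall>x'\<in>X. \<forall>t\<in>X. dist x x' < d \<longrightarrow> \<bar>k x t - k x' t\<bar> < e'"
    using kunif[OF e'] by blast
  show "\<exists>d>0. \<forall>x'\<in>X. dist x' x < d \<longrightarrow> dist (cov_op X k \<nu> x') (cov_op X k \<nu> x) < e"
  proof (intro exI[of _ d] conjI d ballI impI)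
    fix x' assume x'X: "x' \<in> X" and dd: "dist x' x < d"
    have "\<forall>t\<in>X. \<bar>k x' t - k x t\<bar> \<le> e'" using H x'X xX dd by (meson less_imp_le)
    then have "\<bar>cov_op X k \<nu> x' - cov_op X k \<nu> x\<bar> \<le> e' * Tm X \<nu>"
      by (rule cov_diffb[OF g x'X xX])
    also have "\<dots> < e"
    proof -
      have "e' * Tm X \<nu> = e * (Tm X \<nu> / (Tm X \<nu> + 1))" unfolding e'_def by simp
      also have "\<dots> < e * 1" using e T0 by (intro mult_strict_left_mono) auto
      finally show ?thesis by simp
    qed
    finally show "dist (cov_op X k \<nu> x') (cov_op X k \<nu> x) < e" by (simp add: dist_real_def)
  qed
qed

definition finep :: "real \<Rightarrow> nat \<Rightarrow> (nat \<Rightarrow> 'a set) \<Rightarrow> (nat \<Rightarrow> 'a) \<Rightarrow> bool" where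
  "finep e J A z \<longleftrightarrow> partn X J A z \<and>
     (\<forall>j<J. \<forall>x\<in>A j. \<forall>t\<in>X. (\<bar>k x t - k (z j) t\<bar> \<le> e) \<and> (\<bar>k t x - k t (z j)\<bar> \<le> e))"

lemma partn_sub: "partn X J A z \<Longrightarrow> j < J \<Longrightarrow> A j \<subseteq> X"
  unfolding partn_def by auto

lemma partn_z: "partn X J A z \<Longrightarrow> j < J \<Longrightarrow> z j \<in> X"
  unfolding partn_def by auto

lemma finep_ex:
  assumes e: "e > 0"
  shows "\<exists>J A z. finep e J A z"
proof -
  obtain d where d: "d > 0" and H: "\<forall>x\<in>X. \<forall>x'\<in>X. \<forall>t\<in>X. dist x x' < d \<longrightarrow> \<bar>k x t - k x' t\<bar> < e"
    using kunif[OF e] by blast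
  obtain C where CX: "C \<subseteq> X" and fC: "finite C" and cov: "X \<subseteq> (\<Union>c\<in>C. ball c d)"
  proof (rule compactE_image[OF cX, of X "\<lambda>c. ball c d"])
    show "\<And>T. T \<in> X \<Longrightarrow> open (ball T d)" by simp
    show "X \<subseteq> (\<Union>c\<in>X. ball c d)" using d by auto
  qed auto
  obtain zs where zs: "set zs = C" using finite_list[OF fC] by blast
  define J where "J = length zs"
  define z where "z = (\<lambda>j. zs ! j)"
  define A where "A = (\<lambda>j. X \<inter> ball (z j) d - (\<Union>i\<in>{..<j}. ball (z i) d))"
  have zX: "\<And>j. j < J \<Longrightarrow> z j \<in> X" unfolding z_def J_def using zs CX nth_mem by blast
  have Xb: "X \<in> sets borel" using cX compact_imp_closed borel_closed by auto
  have Ab: "A j \<in> sets borel" for j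
    unfolding A_def by (intro sets.Diff sets.Int Xb borel_open) auto
  have disj: "disjoint_family_on A {..<J}"
    unfolding disjoint_family_on_def
  proof (intro ballI impI)
    fix i j assume "i \<in> {..<J}" "j \<in> {..<J}" "i \<noteq> j"
    then have "i < j \<or> j < i" by auto
    then show "A i \<inter> A j = {}" unfolding A_def by auto
  qed
  have un: "(\<Union>j\<in>{..<J}. A j) = X"
  proof
    show "(\<Union>j\<in>{..<J}. A j) \<subseteq> X" unfolding A_def by auto
    show "X \<subseteq> (\<Union>j\<in>{..<J}. A j)"
    proof
      fix x assume xX: "x \<in> X"
      then obtain c where "c \<in> C" "x \<in> ball c d" using cov by auto
      then obtain i where i: "i < J" "x \<in> ball (z i) d" unfolding z_def J_def using zs
        by (metis in_set_conv_nth)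
      define j where "j = (LEAST j. x \<in> ball (z j) d)"
      have j1: "x \<in> ball (z j) d" unfolding j_def using i by (metis LeastI)
      have j2: "j \<le> i" unfolding j_def using i by (metis Least_le)
      have j3: "\<And>l. l < j \<Longrightarrow> x \<notin> ball (z l) d" unfolding j_def using not_less_Least by blast
      have "x \<in> A j" unfolding A_def using xX j1 j3 by auto
      then show "x \<in> (\<Union>j\<in>{..<J}. A j)" using j2 i by auto
    qed
  qed
  have P: "partn X J A z" unfolding partn_def using Ab zX disj un by auto
  have "finep e J A z"
    unfolding finep_def
  proof (intro conjI P allI impI ballI)
    fix j x t assume j: "j < J" and xA: "x \<in> A j" and tX: "t \<in> X"
    have xX: "x \<in> X" and dx: "dist x (z j) < d" using xA unfolding A_def by (auto simp: dist_commute)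
    have 1: "\<bar>k x t - k (z j) t\<bar> < e" using H xX zX[OF j] tX dx by blast
    then show "\<bar>k x t - k (z j) t\<bar> \<le> e" by simp
    show "\<bar>k t x - k t (z j)\<bar> \<le> e" using 1 ksym[OF xX tX] ksym[OF zX[OF j] tX] by simp
  qed
  then show ?thesis by blast
qed

end


context kr
begin

definition fa :: "('m \<Rightarrow> real) \<Rightarrow> 'a \<Rightarrow> real" where
  "fa a x = (\<Sum>m\<in>UNIV. a m * cov_op X k (\<mu> m) x)"

definition La :: "('m \<Rightarrow> real) \<Rightarrow> ('a \<Rightarrow> real) \<Rightarrow> real" where
  "La a h = (\<Sum>m\<in>UNIV. a m * sint (\<mu> m) (\<lambda>x. indicator X x * h x))"

definition Ta :: "('m \<Rightarrow> real) \<Rightarrow> real" where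
  "Ta a = (\<Sum>m\<in>UNIV. \<bar>a m\<bar> * Tm X (\<mu> m))"

definition W :: "(nat \<Rightarrow> 'a set) \<Rightarrow> ('m \<Rightarrow> real) \<Rightarrow> nat \<Rightarrow> real" where
  "W A a j = (\<Sum>m\<in>UNIV. a m * wt A (\<mu> m) j)"

lemma Ta_nonneg: "0 \<le> Ta a"
  unfolding Ta_def by (intro sum_nonneg mult_nonneg_nonneg Tm_nonneg) simp_all

lemma fa_cont: "continuous_on X (fa a)"
proof -
  have "continuous_on X (\<lambda>x. \<Sum>m\<in>UNIV. a m * cov_op X k (\<mu> m) x)"
    by (intro continuous_on_sum continuous_on_mult continuous_on_const cov_cont g\<mu>)
  then show ?thesis unfolding fa_def[abs_def] .
qed

lemma fa_La: "fa a x = La a (k x)"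
  unfolding fa_def La_def cov_op_def ..

lemma La_approx:
  assumes P: "partn X J A z" and hc: "continuous_on X h"
    and md: "\<forall>j<J. \<forall>x\<in>A j. \<bar>h x - h (z j)\<bar> \<le> e"
  shows "\<bar>La a h - (\<Sum>j<J. W A a j * h (z j))\<bar> \<le> e * Ta a"
proof -
  have "(\<Sum>j<J. W A a j * h (z j)) = (\<Sum>m\<in>UNIV. a m * (\<Sum>j<J. wt A (\<mu> m) j * h (z j)))"
    unfolding W_def by (simp add: sum_distrib_left sum_distrib_right ac_simps sum.swap[of _ "{..<J}"])
  then have "La a h - (\<Sum>j<J. W A a j * h (z j))
      = (\<Sum>m\<in>UNIV. a m * (sint (\<mu> m) (\<lambda>x. indicator X x * h x) - (\<Sum>j<J. wt A (\<mu> m) j * h (z j))))"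
    unfolding La_def by (simp add: sum_subtractf right_diff_distrib)
  also have "\<bar>\<dots>\<bar> \<le> (\<Sum>m\<in>UNIV. \<bar>a m * (sint (\<mu> m) (\<lambda>x. indicator X x * h x) - (\<Sum>j<J. wt A (\<mu> m) j * h (z j)))\<bar>)"
    by (rule sum_abs)
  also have "\<dots> \<le> (\<Sum>m\<in>UNIV. \<bar>a m\<bar> * (e * Tm X (\<mu> m)))"
    unfolding abs_mult by (intro sum_mono mult_left_mono sint_approx[OF g\<mu> cX hc P md]) simp
  also have "\<dots> = e * Ta a" unfolding Ta_def by (simp add: sum_distrib_left ac_simps)
  finally show ?thesis .
qed

lemma La_bound:
  assumes hc: "continuous_on X h" and B: "\<forall>x\<in>X. \<bar>h x\<bar> \<le> B"
  shows "\<bar>La a h\<bar> \<le> B * Ta a"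
proof -
  have "\<bar>La a h\<bar> \<le> (\<Sum>m\<in>UNIV. \<bar>a m * sint (\<mu> m) (\<lambda>x. indicator X x * h x)\<bar>)"
    unfolding La_def by (rule sum_abs)
  also have "\<dots> \<le> (\<Sum>m\<in>UNIV. \<bar>a m\<bar> * (B * Tm X (\<mu> m)))"
    unfolding abs_mult by (intro sum_mono mult_left_mono sint_bound[OF g\<mu> cX hc B]) simp
  also have "\<dots> = B * Ta a" unfolding Ta_def by (simp add: sum_distrib_left ac_simps)
  finally show ?thesis .
qed

lemma sumW:
  assumes P: "partn X J A z"
  shows "(\<Sum>j<J. \<bar>W A a j\<bar>) \<le> Ta a"
proof -
  have "(\<Sum>j<J. \<bar>W A a j\<bar>) \<le> (\<Sum>j<J. \<Sum>m\<in>UNIV. \<bar>a m\<bar> * \<bar>wt A (\<mu> m) j\<bar>)"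
    unfolding W_def by (intro sum_mono) (metis (no_types, lifting) abs_mult sum.cong sum_abs)
  also have "\<dots> = (\<Sum>m\<in>UNIV. \<bar>a m\<bar> * (\<Sum>j<J. \<bar>wt A (\<mu> m) j\<bar>))"
    by (simp add: sum_distrib_left sum.swap[of _ "{..<J}"])
  also have "\<dots> \<le> (\<Sum>m\<in>UNIV. \<bar>a m\<bar> * Tm X (\<mu> m))"
    by (intro sum_mono mult_left_mono sum_wt[OF g\<mu> cX P]) simp
  finally show ?thesis unfolding Ta_def .
qed

lemma fa_mod:
  assumes F: "finep e J A z" and j: "j < J" and xA: "x \<in> A j"
  shows "\<bar>fa a x - fa a (z j)\<bar> \<le> e * Ta a"
proof -
  have P: "partn X J A z" using F unfolding finep_def by auto
  have xX: "x \<in> X" using partn_sub[OF P j] xA by auto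
  have zX: "z j \<in> X" using partn_z[OF P j] .
  have B: "\<forall>t\<in>X. \<bar>k x t - k (z j) t\<bar> \<le> e" using F j xA unfolding finep_def by blast
  have "fa a x - fa a (z j) = (\<Sum>m\<in>UNIV. a m * (cov_op X k (\<mu> m) x - cov_op X k (\<mu> m) (z j)))"
    unfolding fa_def by (simp add: sum_subtractf right_diff_distrib)
  also have "\<bar>\<dots>\<bar> \<le> (\<Sum>m\<in>UNIV. \<bar>a m * (cov_op X k (\<mu> m) x - cov_op X k (\<mu> m) (z j))\<bar>)"
    by (rule sum_abs)
  also have "\<dots> \<le> (\<Sum>m\<in>UNIV. \<bar>a m\<bar> * (e * Tm X (\<mu> m)))"
    unfolding abs_mult by (intro sum_mono mult_left_mono cov_diffb[OF g\<mu> xX zX B]) simp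
  also have "\<dots> = e * Ta a" unfolding Ta_def by (simp add: sum_distrib_left ac_simps)
  finally show ?thesis .
qed

lemma fa_approx:
  assumes F: "finep e J A z" and xX: "x \<in> X"
  shows "\<bar>fa a x - (\<Sum>l<J. W A a l * k x (z l))\<bar> \<le> e * Ta a"
proof -
  have P: "partn X J A z" using F unfolding finep_def by auto
  have md: "\<forall>j<J. \<forall>t\<in>A j. \<bar>k x t - k x (z j)\<bar> \<le> e" using F xX unfolding finep_def by blast
  show ?thesis unfolding fa_La by (rule La_approx[OF P kcont2[OF xX] md])
qed

lemma main_approx:
  assumes F: "finep e J A z" and e: "0 \<le> e"
  shows "\<bar>La a (fa b) - (\<Sum>j<J. \<Sum>l<J. W A a j * W A b l * k (z j) (z l))\<bar> \<le> 2 * e * Ta a * Ta b"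
proof -
  have P: "partn X J A z" using F unfolding finep_def by auto
  have md: "\<forall>j<J. \<forall>x\<in>A j. \<bar>fa b x - fa b (z j)\<bar> \<le> e * Ta b"
    using fa_mod[OF F] by blast
  have 1: "\<bar>La a (fa b) - (\<Sum>j<J. W A a j * fa b (z j))\<bar> \<le> e * Ta b * Ta a"
    by (rule La_approx[OF P fa_cont md])
  have "(\<Sum>j<J. W A a j * fa b (z j)) - (\<Sum>j<J. \<Sum>l<J. W A a j * W A b l * k (z j) (z l))
      = (\<Sum>j<J. W A a j * (fa b (z j) - (\<Sum>l<J. W A b l * k (z j) (z l))))"
    by (simp add: sum_subtractf right_diff_distrib sum_distrib_left ac_simps)
  also have "\<bar>\<dots>\<bar> \<le> (\<Sum>j<J. \<bar>W A a j * (fa b (z j) - (\<Sum>l<J. W A b l * k (z j) (z l)))\<bar>)"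
    by (rule sum_abs)
  also have "\<dots> \<le> (\<Sum>j<J. \<bar>W A a j\<bar> * (e * Ta b))"
    unfolding abs_mult by (intro sum_mono mult_left_mono fa_approx[OF F] partn_z[OF P]) auto
  also have "\<dots> = (\<Sum>j<J. \<bar>W A a j\<bar>) * (e * Ta b)" by (simp add: sum_distrib_right)
  also have "\<dots> \<le> Ta a * (e * Ta b)"
    by (intro mult_right_mono sumW[OF P]) (simp add: e Ta_nonneg)
  finally have 2: "\<bar>(\<Sum>j<J. W A a j * fa b (z j)) - (\<Sum>j<J. \<Sum>l<J. W A a j * W A b l * k (z j) (z l))\<bar>
     \<le> Ta a * (e * Ta b)" .
  from 1 2 show ?thesis by (simp add: algebra_simps; smt (verit))
qed

end


lemma eps0:
  fixes x K :: real
  assumes "\<And>e. e > 0 \<Longrightarrow> \<bar>x\<bar> \<le> e * K"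
  shows "x = 0"
proof (rule ccontr)
  assume x: "x \<noteq> 0"
  define e where "e = \<bar>x\<bar> / (2 * (\<bar>K\<bar> + 1))"
  have e: "e > 0" unfolding e_def using x by (simp add: add_pos_nonneg)
  have "\<bar>x\<bar> \<le> e * K" using assms[OF e] .
  also have "\<dots> \<le> e * (\<bar>K\<bar> + 1)" using e by (intro mult_left_mono) auto
  also have "\<dots> = \<bar>x\<bar> / 2" unfolding e_def
    using add_pos_nonneg[of 1 "\<bar>K\<bar>"] by (simp add: field_simps)
  finally show False using x by simp
qed

lemma epsge:
  fixes x K :: real
  assumes "\<And>e. e > 0 \<Longrightarrow> - (e * K) \<le> x"
  shows "0 \<le> x"
proof (rule ccontr)
  assume x: "\<not> 0 \<le> x"
  define e where "e = - x / (2 * (\<bar>K\<bar> + 1))"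
  have e: "e > 0" unfolding e_def using x add_pos_nonneg[of 1 "\<bar>K\<bar>"] by (simp add: divide_neg_pos)
  have "- x \<le> e * K" using assms[OF e] by simp
  also have "\<dots> \<le> e * (\<bar>K\<bar> + 1)" using e by (intro mult_left_mono) auto
  also have "\<dots> = - x / 2" unfolding e_def
    using add_pos_nonneg[of 1 "\<bar>K\<bar>"] by (simp add: field_simps)
  finally show False using x by simp
qed

lemma disc:
  fixes q S D :: real
  assumes D: "0 \<le> D" and H: "\<And>t. 0 \<le> q + 2 * t * S + t\<^sup>2 * D"
  shows "S\<^sup>2 \<le> q * D"
proof (cases "D = 0")
  case True
  show ?thesis
  proof (cases "S = 0")
    case False
    have "0 \<le> q + 2 * (- (\<bar>q\<bar> + 1) / (2 * S)) * S" using H[of "- (\<bar>q\<bar> + 1) / (2 * S)"] True by simp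
    also have "\<dots> = q - (\<bar>q\<bar> + 1)" using False by (simp add: field_simps)
    finally show ?thesis by simp
  qed (simp add: True)
next
  case False
  then have Dp: "D > 0" using D by simp
  have "0 \<le> q + 2 * (- S / D) * S + (- S / D)\<^sup>2 * D" by (rule H)
  also have "\<dots> = q - S\<^sup>2 / D" using Dp by (simp add: field_simps power2_eq_square)
  finally have "S\<^sup>2 / D \<le> q" by simp
  then show ?thesis using Dp by (simp add: field_simps)
qed

lemma lowlem:
  fixes q r :: real
  assumes q: "q > 0" and r: "r \<ge> 0"
    and H: "\<And>e. e > 0 \<Longrightarrow> \<exists>S D. q - e \<le> S \<and> D \<le> q + 2 * e \<and> S\<^sup>2 \<le> r * D"
  shows "q \<le> r"
proof (rule ccontr)
  assume "\<not> q \<le> r"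
  then have rq: "r < q" by simp
  define e where "e = q * (q - r) / (4 * (q + r))"
  have qr: "q + r > 0" using q r by simp
  have e: "e > 0" unfolding e_def using q rq qr by simp
  have eq: "e \<le> q / 4"
  proof -
    have "(q - r) / (q + r) \<le> 1" using qr r by simp
    then have h0: "q * ((q - r) / (q + r)) \<le> q * 1" using q by (intro mult_left_mono) auto
    then have h: "q * ((q - r) / (q + r)) \<le> q" by simp
    have "e = (q * ((q - r) / (q + r))) / 4" unfolding e_def by simp
    moreover have "q * ((q - r) / (q + r)) / 4 \<le> q / 4" using h by (rule divide_right_mono) simp
    ultimately show ?thesis by simp
  qed
  obtain S D where S: "q - e \<le> S" and Dq: "D \<le> q + 2 * e" and SD: "S\<^sup>2 \<le> r * D" using H[OF e] by blast
  have "(q - e)\<^sup>2 \<le> S\<^sup>2" using S eq q by (intro power_mono) auto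
  also have "\<dots> \<le> r * D" by (rule SD)
  also have "\<dots> \<le> r * (q + 2 * e)" using r Dq by (intro mult_left_mono)
  finally have "(q - e)\<^sup>2 \<le> r * (q + 2 * e)" .
  then have "q * (q - r) \<le> 2 * e * (q + r) - e\<^sup>2" by (simp add: power2_eq_square algebra_simps)
  also have "\<dots> \<le> 2 * e * (q + r)" by simp
  also have "\<dots> = q * (q - r) / 2" unfolding e_def using qr by (simp add: field_simps)
  finally show False using q rq by simp
qed

lemma sum_split_add: "(\<Sum>i<n + (J::nat). f i) = (\<Sum>i<n. f i) + (\<Sum>l<J. f (n + l))"
  by (induct J) (simp_all add: add_ac)

context kr
begin

lemma dsum_sym:
  assumes P: "partn X J A z"
  shows "(\<Sum>j<J. \<Sum>l<J. W A a j * W A b l * k (z j) (z l)) = (\<Sum>j<J. \<Sum>l<J. W A b j * W A a l * k (z j) (z l))"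
proof -
  have "(\<Sum>j<J. \<Sum>l<J. W A a j * W A b l * k (z j) (z l)) = (\<Sum>l<J. \<Sum>j<J. W A a j * W A b l * k (z j) (z l))"
    by (rule sum.swap)
  also have "\<dots> = (\<Sum>l<J. \<Sum>j<J. W A b l * W A a j * k (z l) (z j))"
    by (intro sum.cong refl) (simp add: ksym[OF partn_z[OF P] partn_z[OF P]] ac_simps)
  finally show ?thesis .
qed

lemma La_sym: "La a (fa b) = La b (fa a)"
proof -
  have "\<bar>La a (fa b) - La b (fa a)\<bar> \<le> e * (4 * Ta a * Ta b)" if e: "e > 0" for e
  proof -
    obtain J A z where F: "finep e J A z" using finep_ex[OF e] by blast
    have P: "partn X J A z" using F unfolding finep_def by auto
    have 1: "\<bar>La a (fa b) - (\<Sum>j<J. \<Sum>l<J. W A a j * W A b l * k (z j) (z l))\<bar> \<le> 2 * e * Ta a * Ta b"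
      using main_approx[OF F] e by simp
    have 2: "\<bar>La b (fa a) - (\<Sum>j<J. \<Sum>l<J. W A a j * W A b l * k (z j) (z l))\<bar> \<le> 2 * e * Ta b * Ta a"
      using main_approx[OF F, of b a] e unfolding dsum_sym[OF P, of b a] by simp
    from 1 2 show ?thesis by (simp add: algebra_simps; smt (verit))
  qed
  then have "La a (fa b) - La b (fa a) = 0" by (rule eps0)
  then show ?thesis by simp
qed

lemma psd:
  fixes zp :: "nat \<Rightarrow> 'a" and c :: "nat \<Rightarrow> real" and n :: nat
  assumes zp: "\<forall>i<n. zp i \<in> X"
  shows "0 \<le> La a (fa a) + 2 * (\<Sum>i<n. c i * fa a (zp i)) + (\<Sum>i<n. \<Sum>j<n. c i * c j * k (zp i) (zp j))"
proof (rule epsge)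
  fix e :: real assume e: "e > 0"
  obtain J A z where F: "finep e J A z" using finep_ex[OF e] by blast
  have P: "partn X J A z" using F unfolding finep_def by auto
  define Cc where "Cc = (\<lambda>i. if i < n then c i else W A a (i - n))"
  define Zc where "Zc = (\<lambda>i. if i < n then zp i else z (i - n))"
  have ZX: "\<forall>i<n + J. Zc i \<in> X" unfolding Zc_def using zp partn_z[OF P] by auto
  define Pp where "Pp = (\<Sum>i<n. \<Sum>j<n. c i * c j * k (zp i) (zp j))"
  define Q where "Q = (\<Sum>i<n. \<Sum>l<J. c i * W A a l * k (zp i) (z l))"
  define R where "R = (\<Sum>j<J. \<Sum>l<J. W A a j * W A a l * k (z j) (z l))"
  have Q2: "(\<Sum>l<J. \<Sum>j<n. W A a l * c j * k (z l) (zp j)) = Q"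
    unfolding Q_def
    by (subst sum.swap) (intro sum.cong refl, simp add: ksym[OF partn_z[OF P] zp[rule_format]] ac_simps)
  have "0 \<le> (\<Sum>i<n + J. \<Sum>j<n + J. Cc i * Cc j * k (Zc i) (Zc j))" by (rule kpsd[OF ZX])
  also have "\<dots> = Pp + 2 * Q + R"
    unfolding sum_split_add Cc_def Zc_def Pp_def R_def using Q2
    by (simp add: sum.distrib Q_def)
  finally have psd0: "0 \<le> Pp + 2 * Q + R" .
  have 1: "\<bar>La a (fa a) - R\<bar> \<le> 2 * e * Ta a * Ta a" unfolding R_def using main_approx[OF F] e by simp
  have "\<bar>(\<Sum>i<n. c i * fa a (zp i)) - Q\<bar> = \<bar>\<Sum>i<n. c i * (fa a (zp i) - (\<Sum>l<J. W A a l * k (zp i) (z l)))\<bar>"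
    unfolding Q_def by (simp add: sum_subtractf right_diff_distrib sum_distrib_left ac_simps)
  also have "\<dots> \<le> (\<Sum>i<n. \<bar>c i * (fa a (zp i) - (\<Sum>l<J. W A a l * k (zp i) (z l)))\<bar>)" by (rule sum_abs)
  also have "\<dots> \<le> (\<Sum>i<n. \<bar>c i\<bar> * (e * Ta a))"
    unfolding abs_mult by (intro sum_mono mult_left_mono fa_approx[OF F]) (auto simp: zp)
  also have "\<dots> = e * (Ta a * (\<Sum>i<n. \<bar>c i\<bar>))" by (simp add: sum_distrib_left sum_distrib_right ac_simps)
  finally have 2: "\<bar>(\<Sum>i<n. c i * fa a (zp i)) - Q\<bar> \<le> e * (Ta a * (\<Sum>i<n. \<bar>c i\<bar>))" .
  have 3: "2 * e * Ta a * Ta a = e * (2 * Ta a * Ta a)" by simp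
  show "- (e * (2 * Ta a * Ta a + 2 * (Ta a * (\<Sum>i<n. \<bar>c i\<bar>)))) \<le>
      La a (fa a) + 2 * (\<Sum>i<n. c i * fa a (zp i)) + (\<Sum>i<n. \<Sum>j<n. c i * c j * k (zp i) (zp j))"
    using psd0 1 2 unfolding Pp_def[symmetric] 3 by (simp add: algebra_simps; smt (verit))
qed

lemma q_nonneg: "0 \<le> La a (fa a)"
  using psd[of 0] by simp

end


lemma rk_elem:
  fixes z :: "nat \<Rightarrow> 'a" and c :: "nat \<Rightarrow> real"
  assumes "\<forall>i<n. z i \<in> X" "(\<Sum>i<n. \<Sum>j<n. c i * c j * k (z i) (z j)) \<le> 1"
  shows "ereal ((\<Sum>i<n. c i * g (z i))\<^sup>2) \<le> rkhs_norm_sq X k g"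
  unfolding rkhs_norm_sq_def by (rule Sup_upper) (use assms in blast)

lemma rk_ge0: "0 \<le> rkhs_norm_sq X k g"
  using rk_elem[where n=0 and z="\<lambda>_. undefined" and X=X and k=k and c="\<lambda>_. 0" and g=g] by (simp add: zero_ereal_def)

lemma rk_le:
  assumes "\<And>n (z :: nat \<Rightarrow> 'a) (c :: nat \<Rightarrow> real). \<forall>i<n. z i \<in> X \<Longrightarrow>
     (\<Sum>i<n. \<Sum>j<n. c i * c j * k (z i) (z j)) \<le> 1 \<Longrightarrow> (\<Sum>i<n. c i * g (z i))\<^sup>2 \<le> q"
  shows "rkhs_norm_sq X k g \<le> ereal q"
  unfolding rkhs_norm_sq_def by (rule Sup_least) (use assms in auto)

context kr
begin

lemma rk_cs:
  fixes z :: "nat \<Rightarrow> 'a" and c :: "nat \<Rightarrow> real"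
  assumes s: "rkhs_norm_sq X k g = ereal r" and zX: "\<forall>i<n. z i \<in> X"
  shows "(\<Sum>i<n. c i * g (z i))\<^sup>2 \<le> r * (\<Sum>i<n. \<Sum>j<n. c i * c j * k (z i) (z j))"
proof -
  define S where "S = (\<Sum>i<n. c i * g (z i))"
  define D where "D = (\<Sum>i<n. \<Sum>j<n. c i * c j * k (z i) (z j))"
  have D0: "0 \<le> D" unfolding D_def by (rule kpsd[OF zX])
  have r0: "0 \<le> r" using rk_ge0[of X k g] s by simp
  have scale: "(\<Sum>i<n. (t * c i) * g (z i)) = t * S" for t
    unfolding S_def by (simp add: sum_distrib_left ac_simps)
  have scaleD: "(\<Sum>i<n. \<Sum>j<n. (t * c i) * (t * c j) * k (z i) (z j)) = t\<^sup>2 * D" for t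
    unfolding D_def by (simp add: sum_distrib_left ac_simps power2_eq_square)
  have key: "(t * S)\<^sup>2 \<le> r" if "t\<^sup>2 * D \<le> 1" for t
  proof -
    have "ereal ((\<Sum>i<n. (t * c i) * g (z i))\<^sup>2) \<le> rkhs_norm_sq X k g"
      by (rule rk_elem[OF zX]) (use that scaleD in simp)
    then show ?thesis unfolding scale s by simp
  qed
  show ?thesis unfolding S_def[symmetric] D_def[symmetric]
  proof (cases "D = 0")
    case True
    show "S\<^sup>2 \<le> r * D"
    proof (cases "S = 0")
      case False
      have "((r + 1) / S * S)\<^sup>2 \<le> r" by (rule key) (simp add: True)
      then have "(r + 1)\<^sup>2 \<le> r" using False by simp
      moreover have "r < (r + 1)\<^sup>2" using r0 by (simp add: power2_eq_square algebra_simps)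
        (smt (verit) mult_nonneg_nonneg)
      ultimately show ?thesis by simp
    qed (simp add: True)
  next
    case False
    then have Dp: "D > 0" using D0 by simp
    have "(1 / sqrt D * S)\<^sup>2 \<le> r" by (rule key) (use Dp in \<open>simp add: power_divide\<close>)
    then have "S\<^sup>2 / D \<le> r" using Dp by (simp add: power_divide power_mult_distrib)
    then show "S\<^sup>2 \<le> r * D" using Dp by (simp add: field_simps)
  qed
qed

lemma norm_eq: "rkhs_norm_sq X k (fa a) = ereal (La a (fa a))"
proof -
  define q where "q = La a (fa a)"
  have q0: "0 \<le> q" unfolding q_def by (rule q_nonneg)
  have le: "rkhs_norm_sq X k (fa a) \<le> ereal q"
  proof (rule rk_le)
    fix n and z :: "nat \<Rightarrow> 'a" and c :: "nat \<Rightarrow> real"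
    assume zX: "\<forall>i<n. z i \<in> X" and D1: "(\<Sum>i<n. \<Sum>j<n. c i * c j * k (z i) (z j)) \<le> 1"
    define S where "S = (\<Sum>i<n. c i * fa a (z i))"
    define D where "D = (\<Sum>i<n. \<Sum>j<n. c i * c j * k (z i) (z j))"
    have D0: "0 \<le> D" unfolding D_def by (rule kpsd[OF zX])
    have "0 \<le> q + 2 * t * S + t\<^sup>2 * D" for t
    proof -
      have "0 \<le> La a (fa a) + 2 * (\<Sum>i<n. (t * c i) * fa a (z i)) + (\<Sum>i<n. \<Sum>j<n. (t * c i) * (t * c j) * k (z i) (z j))"
        by (rule psd[OF zX])
      moreover have "(\<Sum>i<n. (t * c i) * fa a (z i)) = t * S"
        unfolding S_def by (simp add: sum_distrib_left ac_simps)
      moreover have "(\<Sum>i<n. \<Sum>j<n. (t * c i) * (t * c j) * k (z i) (z j)) = t\<^sup>2 * D"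
        unfolding D_def by (simp add: sum_distrib_left ac_simps power2_eq_square)
      ultimately show ?thesis unfolding q_def by simp
    qed
    then have "S\<^sup>2 \<le> q * D" by (rule disc[OF D0])
    also have "\<dots> \<le> q * 1" using D1 q0 unfolding D_def by (intro mult_left_mono) auto
    finally show "(\<Sum>i<n. c i * fa a (z i))\<^sup>2 \<le> q" unfolding S_def by simp
  qed
  obtain r where s: "rkhs_norm_sq X k (fa a) = ereal r"
    using le rk_ge0[of X k "fa a"] by (cases "rkhs_norm_sq X k (fa a)") auto
  have r0: "0 \<le> r" using rk_ge0[of X k "fa a"] s by simp
  have "q \<le> r"
  proof (cases "q > 0")
    case False
    then show ?thesis using r0 by simp
  next
    case qp: True
    have Tp: "Ta a > 0"
    proof (rule ccontr)
      assume "\<not> Ta a > 0"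
      then have T0: "Ta a = 0" using Ta_nonneg[of a] by simp
      obtain B where B: "\<forall>x\<in>X. \<bar>fa a x\<bar> \<le> B" using cont_bounded[OF cX fa_cont] by blast
      have "\<bar>q\<bar> \<le> B * Ta a" unfolding q_def by (rule La_bound[OF fa_cont B])
      then show False using T0 qp by simp
    qed
    show ?thesis
    proof (rule lowlem[OF qp r0])
      fix e :: real assume e: "e > 0"
      define \<epsilon> where "\<epsilon> = e / (Ta a * Ta a)"
      have \<epsilon>: "\<epsilon> > 0" unfolding \<epsilon>_def using e Tp by simp
      have \<epsilon>e: "\<epsilon> * Ta a * Ta a = e" unfolding \<epsilon>_def using Tp by simp
      obtain J A z where F: "finep \<epsilon> J A z" using finep_ex[OF \<epsilon>] by blast
      have P: "partn X J A z" using F unfolding finep_def by auto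
      define S where "S = (\<Sum>j<J. W A a j * fa a (z j))"
      define D where "D = (\<Sum>j<J. \<Sum>l<J. W A a j * W A a l * k (z j) (z l))"
      have md: "\<forall>j<J. \<forall>x\<in>A j. \<bar>fa a x - fa a (z j)\<bar> \<le> \<epsilon> * Ta a"
        using fa_mod[OF F] by blast
      have 1: "\<bar>q - S\<bar> \<le> \<epsilon> * Ta a * Ta a"
        unfolding q_def S_def by (rule La_approx[OF P fa_cont md])
      have 2: "\<bar>q - D\<bar> \<le> 2 * \<epsilon> * Ta a * Ta a"
        unfolding q_def D_def using main_approx[OF F] \<epsilon> by simp
      have 3: "S\<^sup>2 \<le> r * D"
        unfolding S_def D_def by (rule rk_cs[OF s]) (use partn_z[OF P] in blast)
      show "\<exists>S D. q - e \<le> S \<and> D \<le> q + 2 * e \<and> S\<^sup>2 \<le> r * D"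
        using 1 2 3 \<epsilon>e by (intro exI[of _ S] exI[of _ D]) (auto simp: abs_le_iff)
    qed
  qed
  then have "ereal q \<le> rkhs_norm_sq X k (fa a)" using s by simp
  with le show ?thesis unfolding q_def by (rule antisym)
qed

lemma zero_fa:
  assumes q: "La a (fa a) = 0" and xX: "x \<in> X"
  shows "fa a x = 0"
proof -
  have s: "rkhs_norm_sq X k (fa a) = ereal 0" using norm_eq q by simp
  have "(fa a x)\<^sup>2 \<le> 0"
    using rk_cs[OF s, where n="Suc 0" and z="\<lambda>_. x" and c="\<lambda>_. 1"] xX by simp
  then show ?thesis by (simp add: lessThan_Suc)
qed

end


context kr
begin

definition av :: "real^'m \<Rightarrow> 'm \<Rightarrow> real" where "av v = (\<lambda>m. v $ m)"

lemma M1: "(C_LL X k \<mu> *v v) $ m = sint (\<mu> m) (\<lambda>x. indicator X x * fa (av v) x)"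
proof -
  have "(C_LL X k \<mu> *v v) $ m = (\<Sum>m'\<in>UNIV. v $ m' * sint (\<mu> m) (\<lambda>x. indicator X x * cov_op X k (\<mu> m') x))"
    unfolding matrix_vector_mult_def C_LL_def by (simp add: ac_simps)
  also have "\<dots> = sint (\<mu> m) (\<lambda>x. indicator X x * (\<Sum>m'\<in>UNIV. v $ m' * cov_op X k (\<mu> m') x))"
    by (rule sint_sum[OF g\<mu> cX cov_cont[OF g\<mu>], symmetric])
  finally show ?thesis unfolding fa_def av_def .
qed

lemma M1i: "u \<bullet> (C_LL X k \<mu> *v v) = La (av u) (fa (av v))"
  unfolding inner_vec_def M1 La_def av_def by simp

lemma M2: "(transpose (C_LD X k \<mu> xs) *v v) $ n = fa (av v) (xs n)" if xsX: "xs n \<in> X"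
proof -
  have e: "indicator X x' * k x' (xs n) = indicator X x' * k (xs n) x'" for x'
    using ksym[OF _ xsX] by (auto simp: indicator_def)
  show ?thesis
    unfolding matrix_vector_mult_def transpose_def C_LD_def fa_def av_def cov_op_def
    by (simp add: ac_simps e)
qed

lemma M3: "C_xL X k \<mu> x \<bullet> v = fa (av v) x"
  unfolding inner_vec_def C_xL_def fa_def av_def by (simp add: ac_simps)

lemma Csym: "u \<bullet> (C_LL X k \<mu> *v v) = v \<bullet> (C_LL X k \<mu> *v u)"
  unfolding M1i by (rule La_sym)

lemma Cq0: "0 \<le> v \<bullet> (C_LL X k \<mu> *v v)"
  unfolding M1i by (rule q_nonneg)

lemma Czero: "v \<bullet> (C_LL X k \<mu> *v v) = 0 \<Longrightarrow> x \<in> X \<Longrightarrow> fa (av v) x = 0"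
  unfolding M1i by (rule zero_fa)

lemma Czero2: "v \<bullet> (C_LL X k \<mu> *v v) = 0 \<Longrightarrow> C_LL X k \<mu> *v v = 0"
proof -
  assume q: "v \<bullet> (C_LL X k \<mu> *v v) = 0"
  have "(\<lambda>x. indicator X x * fa (av v) x) = (\<lambda>x. 0)"
    using Czero[OF q] by (auto simp: indicator_def)
  then show ?thesis unfolding vec_eq_iff M1 by (simp add: sint_def)
qed

lemma fa_diff: "fa (av (b - v)) x = fa (av b) x - fa (av v) x"
  unfolding fa_def av_def by (simp add: sum_subtractf left_diff_distrib)

lemma inner_tr: "(u::real^'n) \<bullet> (transpose A *v d) = d \<bullet> (A *v u)"
  by (metis dot_lmul_matrix inner_commute transpose_matrix_vector)

end


theorem theorem1:
  fixes X :: "'a::euclidean_space set"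
    and k :: "'a \<Rightarrow> 'a \<Rightarrow> real"
    and \<mu> :: "'m::finite \<Rightarrow> 'a smeasure"
    and xs :: "'n::finite \<Rightarrow> 'a"
    and y :: "real^'n"
    and \<sigma>2 lam :: real
  assumes "compact X"
    and "cov_kernel X k"
    and "\<forall>m. signed_borel_on X (\<mu> m)"
    and "\<forall>n. xs n \<in> X"
    and "invertible (C_LL X k \<mu>)"
    and "lam > 0"
    and "\<sigma>2 = real CARD('n) * lam"
  shows "is_argmin_on (krr_objective X k xs y lam) (nystrom_space X k \<mu>) (mean_Qstar X k \<mu> xs y \<sigma>2)
     \<and> (\<forall>f. is_argmin_on (krr_objective X k xs y lam) (nystrom_space X k \<mu>) f
            \<longrightarrow> (\<forall>x\<in>X. f x = mean_Qstar X k \<mu> xs y \<sigma>2 x))"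
proof -
  interpret kr X k \<mu> using assms(1-3) by unfold_locales auto
  have xsX: "\<And>n. xs n \<in> X" using assms(4) by auto
  have lam: "lam > 0" using assms(6) .
  define N where "N = real CARD('n)"
  have N: "N > 0" unfolding N_def by simp
  have s2: "\<sigma>2 = N * lam" unfolding N_def using assms(7) .
  have s2p: "\<sigma>2 > 0" using N lam s2 by simp
  define C where "C = C_LL X k \<mu>"
  define LD where "LD = C_LD X k \<mu> xs"
  define Lt where "Lt = transpose LD"
  define Mat where "Mat = \<sigma>2 *\<^sub>R C + LD ** Lt"
  have Ci: "invertible C" unfolding C_def using assms(5) .
  have Mv: "Mat *v v = \<sigma>2 *\<^sub>R (C *v v) + LD *v (Lt *v v)" for v
    unfolding Mat_def by (simp add: matrix_vector_mult_add_rdistrib scaleR_matrix_vector_assoc matrix_vector_mul_assoc)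
  have inj: "v = 0" if "Mat *v v = 0" for v
  proof -
    have "0 = v \<bullet> (Mat *v v)" using that by simp
    also have "\<dots> = \<sigma>2 * (v \<bullet> (C *v v)) + (Lt *v v) \<bullet> (Lt *v v)"
    proof -
      have "v \<bullet> (LD *v (Lt *v v)) = (Lt *v v) \<bullet> (Lt *v v)"
        using inner_tr[of v Lt "Lt *v v"] unfolding Lt_def by simp
      then show ?thesis unfolding Mv inner_add_right inner_scaleR_right by simp
    qed
    finally have e0: "\<sigma>2 * (v \<bullet> (C *v v)) + (Lt *v v) \<bullet> (Lt *v v) = 0" by simp
    have "v \<bullet> (C *v v) \<ge> 0" unfolding C_def by (rule Cq0)
    then have "v \<bullet> (C *v v) = 0" using e0 s2p
      by (smt (verit) inner_ge_zero mult_pos_pos)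
    then have "C *v v = 0" unfolding C_def by (rule Czero2)
    then have "C *v v = C *v 0" by simp
    then show "v = 0" using inj_matrix_vector_mult[OF Ci] by (meson injD)
  qed
  have Minv: "invertible Mat"
    unfolding invertible_left_inverse matrix_left_invertible_ker using inj by blast
  have MM: "Mat ** matrix_inv Mat = mat 1"
  proof -
    have "\<exists>A'. Mat ** A' = mat 1 \<and> A' ** Mat = mat 1" using Minv unfolding invertible_def .
    then have "Mat ** matrix_inv Mat = mat 1 \<and> matrix_inv Mat ** Mat = mat 1"
      unfolding matrix_inv_def by (rule someI_ex)
    then show ?thesis by simp
  qed
  define vs where "vs = matrix_inv Mat *v (LD *v y)"
  have normal: "Mat *v vs = LD *v y"
  proof -
    have "Mat *v vs = (Mat ** matrix_inv Mat) *v (LD *v y)" unfolding vs_def by (rule matrix_vector_mul_assoc)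
    then show ?thesis unfolding MM by simp
  qed
  have mean: "mean_Qstar X k \<mu> xs y \<sigma>2 = fa (av vs)"
    unfolding mean_Qstar_def vs_def Mat_def C_def LD_def Lt_def by (rule ext) (rule M3)
  define \<Phi> where "\<Phi> v = (1 / N) * ((Lt *v v - y) \<bullet> (Lt *v v - y)) + lam * (v \<bullet> (C *v v))" for v
  have Jeq: "krr_objective X k xs y lam (fa (av v)) = ereal (\<Phi> v)" for v
  proof -
    have m2: "(Lt *v v) $ n = fa (av v) (xs n)" for n
      unfolding Lt_def LD_def by (rule M2[where xs=xs, OF xsX])
    have "(Lt *v v - y) \<bullet> (Lt *v v - y) = (\<Sum>n\<in>UNIV. ((Lt *v v) $ n - y $ n)\<^sup>2)"
      by (simp add: inner_vec_def power2_eq_square)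
    then have "(\<Sum>n\<in>UNIV. (fa (av v) (xs n) - y $ n)\<^sup>2) = (Lt *v v - y) \<bullet> (Lt *v v - y)"
      unfolding m2 by simp
    then show ?thesis
      unfolding krr_objective_def norm_eq \<Phi>_def M1i[symmetric] N_def[symmetric] C_def by simp
  qed
  have Phi_exp: "\<Phi> (vs + d) = \<Phi> vs + (1 / N) * ((Lt *v d) \<bullet> (Lt *v d)) + lam * (d \<bullet> (C *v d))" for d
  proof -
    define r where "r = Lt *v vs - y"
    have LDr: "LD *v r = - (\<sigma>2 *\<^sub>R (C *v vs))"
    proof -
      have "LD *v r = LD *v (Lt *v vs) - LD *v y" unfolding r_def by (simp add: matrix_vector_mult_diff_distrib)
      also have "\<dots> = LD *v (Lt *v vs) - Mat *v vs" unfolding normal ..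
      also have "\<dots> = - (\<sigma>2 *\<^sub>R (C *v vs))" unfolding Mv by simp
      finally show ?thesis .
    qed
    have rw: "r \<bullet> (Lt *v d) = - \<sigma>2 * (d \<bullet> (C *v vs))"
      unfolding Lt_def inner_tr LDr by simp
    have sym: "vs \<bullet> (C *v d) = d \<bullet> (C *v vs)" unfolding C_def by (rule Csym)
    have A: "(Lt *v (vs + d) - y) \<bullet> (Lt *v (vs + d) - y) = r \<bullet> r + 2 * (r \<bullet> (Lt *v d)) + (Lt *v d) \<bullet> (Lt *v d)"
    proof -
      have "Lt *v (vs + d) - y = r + Lt *v d" unfolding r_def by (simp add: matrix_vector_right_distrib)
      then show ?thesis by (simp add: inner_add_left inner_add_right inner_commute)
    qed
    have B: "(vs + d) \<bullet> (C *v (vs + d)) = vs \<bullet> (C *v vs) + 2 * (d \<bullet> (C *v vs)) + d \<bullet> (C *v d)"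
      using sym by (simp add: matrix_vector_right_distrib inner_add_left inner_add_right)
    have "(1 / N) * (2 * (- \<sigma>2 * (d \<bullet> (C *v vs)))) + lam * (2 * (d \<bullet> (C *v vs))) = 0"
      unfolding s2 using N by (simp add: field_simps)
    then show ?thesis unfolding \<Phi>_def A B rw r_def[symmetric] by (simp add: algebra_simps)
  qed
  have Phi_min: "\<Phi> vs \<le> \<Phi> b" for b
  proof -
    have "\<Phi> b = \<Phi> vs + (1 / N) * ((Lt *v (b - vs)) \<bullet> (Lt *v (b - vs))) + lam * ((b - vs) \<bullet> (C *v (b - vs)))"
      using Phi_exp[of "b - vs"] by simp
    moreover have "0 \<le> (1 / N) * ((Lt *v (b - vs)) \<bullet> (Lt *v (b - vs)))" using N by simp
    moreover have "0 \<le> lam * ((b - vs) \<bullet> (C *v (b - vs)))"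
      using lam Cq0 unfolding C_def by simp
    ultimately show ?thesis by linarith
  qed
  have nys: "g \<in> nystrom_space X k \<mu> \<longleftrightarrow> (\<exists>b. g = fa (av b))" for g
  proof
    assume "g \<in> nystrom_space X k \<mu>"
    then obtain a where "g = (\<lambda>x. \<Sum>m\<in>UNIV. a m * cov_op X k (\<mu> m) x)" unfolding nystrom_space_def by blast
    then have "g = fa (av (vec_lambda a))" unfolding fa_def av_def by simp
    then show "\<exists>b. g = fa (av b)" by blast
  next
    assume "\<exists>b. g = fa (av b)"
    then obtain b where "g = fa (av b)" by blast
    then show "g \<in> nystrom_space X k \<mu>" unfolding nystrom_space_def fa_def[abs_def] by blast
  qed
  have part1: "is_argmin_on (krr_objective X k xs y lam) (nystrom_space X k \<mu>) (mean_Qstar X k \<mu> xs y \<sigma>2)"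
    unfolding is_argmin_on_def mean
  proof (intro conjI ballI)
    show "fa (av vs) \<in> nystrom_space X k \<mu>" using nys by blast
    fix g assume "g \<in> nystrom_space X k \<mu>"
    then obtain b where g: "g = fa (av b)" using nys by blast
    show "krr_objective X k xs y lam (fa (av vs)) \<le> krr_objective X k xs y lam g"
      unfolding g Jeq using Phi_min by simp
  qed
  have part2: "\<forall>x\<in>X. f x = mean_Qstar X k \<mu> xs y \<sigma>2 x"
    if f: "is_argmin_on (krr_objective X k xs y lam) (nystrom_space X k \<mu>) f" for f
  proof
    fix x assume xX: "x \<in> X"
    obtain b where fb: "f = fa (av b)" using f nys unfolding is_argmin_on_def by blast
    have "krr_objective X k xs y lam f \<le> krr_objective X k xs y lam (fa (av vs))"
      using f nys unfolding is_argmin_on_def by blast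
    then have le: "\<Phi> b \<le> \<Phi> vs" unfolding fb Jeq by simp
    define d where "d = b - vs"
    have "\<Phi> b = \<Phi> vs + (1 / N) * ((Lt *v d) \<bullet> (Lt *v d)) + lam * (d \<bullet> (C *v d))"
      using Phi_exp[of d] unfolding d_def by simp
    moreover have "0 \<le> (1 / N) * ((Lt *v d) \<bullet> (Lt *v d))" using N by simp
    moreover have q0: "0 \<le> d \<bullet> (C *v d)" unfolding C_def by (rule Cq0)
    ultimately have "lam * (d \<bullet> (C *v d)) \<le> 0" using le by linarith
    then have "d \<bullet> (C *v d) = 0" using lam q0 by (smt (verit) mult_pos_pos)
    then have "fa (av d) x = 0" unfolding C_def using xX by (rule Czero)
    then show "f x = mean_Qstar X k \<mu> xs y \<sigma>2 x" unfolding fb mean d_def fa_diff by simp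
  qed
  show ?thesis using part1 part2 by blast
qed

end
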